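(* Let $\Gamma$ be a finite simple graph with a linear order on $V(\Gamma)$, and let $g_1,g_2\in G(\Gamma)$ be such that $g_1g_2$ is geodesic, i.e. $|g_1g_2|=|g_1|+|g_2|$. (i) If $g_2$ is SD-conical, then $\sigma(g_1g_2)\equiv\sigma(g_1)\sigma(g_2)$. (ii) If $g_1$ is SD-conical and strongly non-split, then $g_1g_2$ is also SD-conical and strongly non-split.
   Context: $G(\Gamma)=\langle v\in V(\Gamma)\mid [v_i,v_j]=1 \text{ if } \{v_i,v_j\}\notin E(\Gamma)\rangle$. $|g|$ is word length; a reduced word is a shortest representative; $\mathrm{supp}(g)$ is the set of generators $v$ with $v^{\pm1}$ appearing in a reduced word for $g$; $w_1\equiv w_2$ means equality of words letter by letter. $g_1,g_2$ disjointly commute if their supports are disjoint and each $v_1\in\mathrm{supp}(g_1)$ commutes with each $v_2\in\mathrm{supp}(g_2)$ (i.e. $\{v_1,v_2\}\notin E(\Gamma)$). $g$ is non-split if $\mathrm{supp}(g)$ spans a connected subgraph; strongly non-split if non-split and no generator disjointly commutes with $g$. $S(g)$ is the set of $v\in V(\Gamma)$ such that some reduced word for $g$ begins with $v$ or $v^{-1}$. $g$ is conical if $S(g)$ is a single generator $v_0$, called its apex. A conical $g$ is SD-conical if its apex $v_0$ does not commute with any generator smaller than $v_0$, i.e. $v<v_0$ implies $\{v,v_0\}\in E(\Gamma)$. CGW-normal form: a reduced word $w\equiv v_{i_1}^{\epsilon_1}\cdots v_{i_k}^{\epsilon_k}$ representing $g$ is initially normal if it is empty or $v_{i_1}$ is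 the largest element of $S(g)$; it is normal if all its suffixes are initially normal. Every $g$ has a unique normal representative word, denoted $\sigma(g)$. *)

theory Defs
  imports Main
begin

(* Letters: (v, True) = v, (v, False) = v^{-1}.
   G(Gamma) = < V | [v_i,v_j] = 1 if {v_i,v_j} not an edge >.
   Group elements are represented by words over V; two words represent the same
   element iff they are related by raag_eqv. *)

type_synonym 'a letter = "'a \<times> bool"

definition inv_letter :: "'a letter \<Rightarrow> 'a letter" where
  "inv_letter x = (fst x, \<not> snd x)"

definition word_over :: "'a set \<Rightarrow> 'a letter list \<Rightarrow> bool" where
  "word_over V w \<longleftrightarrow> fst ` set w \<subseteq> V"

definition raag_step :: "'a set \<Rightarrow> ('a \<Rightarrow> 'a \<Rightarrow> bool) \<Rightarrow> 'a letter list \<Rightarrow> 'a letter list \<Rightarrow> bool" where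
  "raag_step V E u w \<longleftrightarrow>
     (\<exists>p q x. fst x \<in> V \<and> u = p @ [x, inv_letter x] @ q \<and> w = p @ q) \<or>
     (\<exists>p q a b. fst a \<noteq> fst b \<and> \<not> E (fst a) (fst b) \<and>
                u = p @ [a, b] @ q \<and> w = p @ [b, a] @ q)"

definition raag_eqv :: "'a set \<Rightarrow> ('a \<Rightarrow> 'a \<Rightarrow> bool) \<Rightarrow> 'a letter list \<Rightarrow> 'a letter list \<Rightarrow> bool" where
  "raag_eqv V E = (\<lambda>u w. raag_step V E u w \<or> raag_step V E w u)\<^sup>*\<^sup>*"

definition wlen :: "'a set \<Rightarrow> ('a \<Rightarrow> 'a \<Rightarrow> bool) \<Rightarrow> 'a letter list \<Rightarrow> nat" where
  "wlen V E w = (LEAST n. \<exists>u. word_over V u \<and> raag_eqv V E w u \<and> length u = n)"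

definition reduced :: "'a set \<Rightarrow> ('a \<Rightarrow> 'a \<Rightarrow> bool) \<Rightarrow> 'a letter list \<Rightarrow> bool" where
  "reduced V E w \<longleftrightarrow> word_over V w \<and> length w = wlen V E w"

definition supp :: "'a set \<Rightarrow> ('a \<Rightarrow> 'a \<Rightarrow> bool) \<Rightarrow> 'a letter list \<Rightarrow> 'a set" where
  "supp V E w = {v. \<exists>u. raag_eqv V E w u \<and> reduced V E u \<and> v \<in> fst ` set u}"

definition disj_commute :: "'a set \<Rightarrow> ('a \<Rightarrow> 'a \<Rightarrow> bool) \<Rightarrow> 'a letter list \<Rightarrow> 'a letter list \<Rightarrow> bool" where
  "disj_commute V E w1 w2 \<longleftrightarrow>
     supp V E w1 \<inter> supp V E w2 = {} \<and>
     (\<forall>v1 \<in> supp V E w1. \<forall>v2 \<in> supp V E w2. \<not> E v1 v2)"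

definition connected_in :: "('a \<Rightarrow> 'a \<Rightarrow> bool) \<Rightarrow> 'a set \<Rightarrow> bool" where
  "connected_in E A \<longleftrightarrow> A \<noteq> {} \<and>
     (\<forall>x \<in> A. \<forall>y \<in> A. (\<lambda>a b. a \<in> A \<and> b \<in> A \<and> E a b)\<^sup>*\<^sup>* x y)"

definition non_split :: "'a set \<Rightarrow> ('a \<Rightarrow> 'a \<Rightarrow> bool) \<Rightarrow> 'a letter list \<Rightarrow> bool" where
  "non_split V E w \<longleftrightarrow> connected_in E (supp V E w)"

definition strongly_non_split :: "'a set \<Rightarrow> ('a \<Rightarrow> 'a \<Rightarrow> bool) \<Rightarrow> 'a letter list \<Rightarrow> bool" where
  "strongly_non_split V E w \<longleftrightarrow> non_split V E w \<and>
     (\<forall>v \<in> V. \<not> disj_commute V E [(v, True)] w)"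

definition start_set :: "'a set \<Rightarrow> ('a \<Rightarrow> 'a \<Rightarrow> bool) \<Rightarrow> 'a letter list \<Rightarrow> 'a set" where
  "start_set V E w = {v. \<exists>u. raag_eqv V E w u \<and> reduced V E u \<and> u \<noteq> [] \<and> fst (hd u) = v}"

definition conical_apex :: "'a set \<Rightarrow> ('a \<Rightarrow> 'a \<Rightarrow> bool) \<Rightarrow> 'a letter list \<Rightarrow> 'a \<Rightarrow> bool" where
  "conical_apex V E w v0 \<longleftrightarrow> start_set V E w = {v0}"

definition conical :: "'a set \<Rightarrow> ('a \<Rightarrow> 'a \<Rightarrow> bool) \<Rightarrow> 'a letter list \<Rightarrow> bool" where
  "conical V E w \<longleftrightarrow> (\<exists>v0. conical_apex V E w v0)"

definition sd_conical :: "'a set \<Rightarrow> ('a \<Rightarrow> 'a \<Rightarrow> bool) \<Rightarrow> ('a::linorder) letter list \<Rightarrow> bool" where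
  "sd_conical V E w \<longleftrightarrow>
     (\<exists>v0. conical_apex V E w v0 \<and> (\<forall>v \<in> V. v < v0 \<longrightarrow> E v v0))"

definition initially_normal :: "'a set \<Rightarrow> ('a \<Rightarrow> 'a \<Rightarrow> bool) \<Rightarrow> ('a::linorder) letter list \<Rightarrow> bool" where
  "initially_normal V E w \<longleftrightarrow> reduced V E w \<and>
     (w = [] \<or> fst (hd w) = Max (start_set V E w))"

definition normal_word :: "'a set \<Rightarrow> ('a \<Rightarrow> 'a \<Rightarrow> bool) \<Rightarrow> ('a::linorder) letter list \<Rightarrow> bool" where
  "normal_word V E w \<longleftrightarrow> (\<forall>k. initially_normal V E (drop k w))"

definition sigma :: "'a set \<Rightarrow> ('a \<Rightarrow> 'a \<Rightarrow> bool) \<Rightarrow> ('a::linorder) letter list \<Rightarrow> 'a letter list" where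
  "sigma V E w = (THE u. raag_eqv V E w u \<and> normal_word V E u)"

end

theory Submission
  imports Defs
begin


lemma inv_inv[simp]: "inv_letter (inv_letter x) = x"
  by (simp add: inv_letter_def)
lemma fst_inv[simp]: "fst (inv_letter x) = fst x"
  by (simp add: inv_letter_def)
lemma inv_neq[simp]: "inv_letter x \<noteq> x" "x \<noteq> inv_letter x"
  by (auto simp: inv_letter_def prod_eq_iff)
lemma inv_eq_iff[simp]: "inv_letter x = inv_letter y \<longleftrightarrow> x = y"
  by (metis inv_inv)

definition sw :: "('a \<Rightarrow> 'a \<Rightarrow> bool) \<Rightarrow> 'a letter list \<Rightarrow> 'a letter list \<Rightarrow> bool" where
  "sw E u w \<longleftrightarrow> (\<exists>p q a b. fst a \<noteq> fst b \<and> \<not> E (fst a) (fst b) \<and>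
                u = p @ [a, b] @ q \<and> w = p @ [b, a] @ q)"

abbreviation teq where "teq E \<equiv> (sw E)\<^sup>*\<^sup>*"

fun canc :: "('a \<Rightarrow> 'a \<Rightarrow> bool) \<Rightarrow> 'a letter \<Rightarrow> 'a letter list \<Rightarrow> 'a letter list option" where
  "canc E x [] = None"
| "canc E x (l # ls) = (if fst l = fst x then (if l = inv_letter x then Some ls else None)
     else if E (fst x) (fst l) then None else map_option (Cons l) (canc E x ls))"

definition act :: "('a \<Rightarrow> 'a \<Rightarrow> bool) \<Rightarrow> 'a letter list \<Rightarrow> 'a letter \<Rightarrow> 'a letter list" where
  "act E r x = (case canc E x (rev r) of Some r' \<Rightarrow> rev r' | None \<Rightarrow> r @ [x])"

definition Phi :: "('a \<Rightarrow> 'a \<Rightarrow> bool) \<Rightarrow> 'a letter list \<Rightarrow> 'a letter list" where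
  "Phi E w = foldl (act E) [] w"

definition cm :: "('a \<Rightarrow> 'a \<Rightarrow> bool) \<Rightarrow> 'a \<Rightarrow> 'a letter list \<Rightarrow> bool" where
  "cm E a m \<longleftrightarrow> (\<forall>y\<in>set m. fst y \<noteq> a \<and> \<not> E a (fst y))"

lemma cm_simps[simp]: "cm E a []" "cm E a (y # m) \<longleftrightarrow> fst y \<noteq> a \<and> \<not> E a (fst y) \<and> cm E a m"
  "cm E a (m @ m') \<longleftrightarrow> cm E a m \<and> cm E a m'" "cm E a (rev m) \<longleftrightarrow> cm E a m"
  by (auto simp: cm_def)

definition irr :: "('a \<Rightarrow> 'a \<Rightarrow> bool) \<Rightarrow> 'a letter list \<Rightarrow> bool" where
  "irr E u \<longleftrightarrow> \<not> (\<exists>p m q x. u = p @ x # m @ inv_letter x # q \<and> cm E (fst x) m)"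

fun F :: "('a \<Rightarrow> 'a \<Rightarrow> bool) \<Rightarrow> 'a letter list \<Rightarrow> 'a set" where
  "F E [] = {}"
| "F E (x # r) = insert (fst x) {y \<in> F E r. y \<noteq> fst x \<and> \<not> E (fst x) y}"

lemma rtranclp_map:
  assumes "\<And>a b. R a b \<Longrightarrow> S (f a) (f b)" "R\<^sup>*\<^sup>* a b"
  shows "S\<^sup>*\<^sup>* (f a) (f b)"
  using assms(2) by induction (auto intro: rtranclp.rtrancl_into_rtrancl assms(1))

lemma word_over_simps[simp]: "word_over V []" "word_over V (x # u) \<longleftrightarrow> fst x \<in> V \<and> word_over V u"
  "word_over V (u @ w) \<longleftrightarrow> word_over V u \<and> word_over V w" "word_over V (rev u) \<longleftrightarrow> word_over V u"
  by (auto simp: word_over_def)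

locale raag =
  fixes V :: "'a set" and E :: "'a \<Rightarrow> 'a \<Rightarrow> bool"
  assumes symE: "\<And>x y. E x y \<Longrightarrow> E y x"
    and inV: "\<And>x y. E x y \<Longrightarrow> x \<in> V \<and> y \<in> V"
begin

lemma sw_sym: "sw E u w \<Longrightarrow> sw E w u"
  unfolding sw_def by (metis symE)

lemma teq_sym: "teq E u w \<Longrightarrow> teq E w u"
  by (induction rule: rtranclp.induct) (auto intro: converse_rtranclp_into_rtranclp sw_sym)

lemma sw_app: "sw E u w \<Longrightarrow> sw E (p @ u @ q) (p @ w @ q)"
  unfolding sw_def by (metis append.assoc)

lemma teq_app: "teq E u w \<Longrightarrow> teq E (p @ u @ q) (p @ w @ q)"
  by (rule rtranclp_map[where f="\<lambda>u. p @ u @ q"]) (auto intro: sw_app)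

lemma teq_Cons: "teq E u w \<Longrightarrow> teq E (x # u) (x # w)"
  using teq_app[of u w "[x]" "[]"] by simp

lemma teq_app2: "teq E u u' \<Longrightarrow> teq E w w' \<Longrightarrow> teq E (u @ w) (u' @ w')"
  using teq_app[of u u' "[]" w] teq_app[of w w' u' "[]"] by simp

lemma sw_length: "sw E u w \<Longrightarrow> length u = length w"
  unfolding sw_def by auto
lemma teq_length: "teq E u w \<Longrightarrow> length u = length w"
  by (induction rule: rtranclp.induct) (auto dest: sw_length)
lemma sw_set: "sw E u w \<Longrightarrow> set u = set w"
  unfolding sw_def by auto
lemma teq_set: "teq E u w \<Longrightarrow> set u = set w"
  by (induction rule: rtranclp.induct) (auto dest: sw_set)

lemma sw_rev: "sw E u w \<Longrightarrow> sw E (rev u) (rev w)"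
proof -
  assume "sw E u w"
  then obtain p q a b where h: "fst a \<noteq> fst b" "\<not> E (fst a) (fst b)" "u = p @ [a, b] @ q" "w = p @ [b, a] @ q"
    unfolding sw_def by blast
  have "\<not> E (fst b) (fst a)" using h symE by blast
  then show ?thesis unfolding sw_def using h
    by (intro exI[of _ "rev q"] exI[of _ "rev p"] exI[of _ b] exI[of _ a]) auto
qed

lemma teq_move: "cm E (fst x) m \<Longrightarrow> teq E (m @ [x]) (x # m)"
proof (induction m)
  case Nil then show ?case by simp
next
  case (Cons y m)
  have "teq E ((y # m) @ [x]) (y # x # m)" using Cons by (auto intro: teq_Cons)
  moreover have "sw E (y # x # m) (x # y # m)"
  proof -
    have "fst y \<noteq> fst x" "\<not> E (fst y) (fst x)" using Cons.prems symE by auto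
    then show ?thesis unfolding sw_def
      by (intro exI[of _ "[]"] exI[of _ m] exI[of _ y] exI[of _ x]) simp
  qed
  ultimately show ?case by (meson rtranclp.rtrancl_into_rtrancl)
qed

lemma sw_step: "sw E u w \<Longrightarrow> raag_step V E u w"
  unfolding sw_def raag_step_def by blast

lemma teq_eqv: "teq E u w \<Longrightarrow> raag_eqv V E u w"
  unfolding raag_eqv_def by (rule rtranclp_map[where f=id, simplified]) (auto dest: sw_step)

lemma eqv_refl: "raag_eqv V E u u"
  unfolding raag_eqv_def by simp

lemma eqv_sym: "raag_eqv V E u w \<Longrightarrow> raag_eqv V E w u"
  unfolding raag_eqv_def
  by (induction rule: rtranclp.induct) (auto intro: converse_rtranclp_into_rtranclp)

lemma eqv_trans: "raag_eqv V E u w \<Longrightarrow> raag_eqv V E w z \<Longrightarrow> raag_eqv V E u z"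
  unfolding raag_eqv_def by (rule rtranclp_trans)

lemma step_app: "raag_step V E u w \<Longrightarrow> raag_step V E (p @ u @ q) (p @ w @ q)"
  unfolding raag_step_def by (metis append.assoc)

lemma eqv_app: "raag_eqv V E u w \<Longrightarrow> raag_eqv V E (p @ u @ q) (p @ w @ q)"
  unfolding raag_eqv_def by (rule rtranclp_map[where f="\<lambda>u. p @ u @ q"]) (auto intro: step_app)

lemma eqv_app2: "raag_eqv V E u u' \<Longrightarrow> raag_eqv V E w w' \<Longrightarrow> raag_eqv V E (u @ w) (u' @ w')"
  using eqv_app[of u u' "[]" w] eqv_app[of w w' u' "[]"] eqv_trans by simp

lemma eqv_cancel: "fst x \<in> V \<Longrightarrow> raag_eqv V E (p @ x # inv_letter x # q) (p @ q)"
proof -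
  assume "fst x \<in> V"
  then have "raag_step V E (p @ x # inv_letter x # q) (p @ q)" unfolding raag_step_def
    by (intro disjI1 exI[of _ p] exI[of _ q] exI[of _ x]) simp
  then show ?thesis unfolding raag_eqv_def by (simp add: r_into_rtranclp)
qed

lemma step_over: "raag_step V E u w \<Longrightarrow> word_over V u \<longleftrightarrow> word_over V w"
  unfolding raag_step_def by (elim disjE exE conjE) auto

lemma eqv_over: "raag_eqv V E u w \<Longrightarrow> word_over V u \<Longrightarrow> word_over V w"
  unfolding raag_eqv_def
  by (induction rule: rtranclp.induct) (auto dest: step_over)

end



lemma canc_Some: "canc E x R = Some R' \<Longrightarrow> \<exists>t s. R = t @ inv_letter x # s \<and> R' = t @ s \<and> cm E (fst x) t"
proof (induction R arbitrary: R')
  case Nil then show ?case by simp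
next
  case (Cons l ls)
  show ?case
  proof (cases "fst l = fst x")
    case True
    then have "l = inv_letter x" "R' = ls" using Cons.prems by (auto split: if_splits)
    then show ?thesis by (intro exI[of _ "[]"] exI[of _ ls]) simp
  next
    case False
    with Cons.prems obtain R'' where "canc E x ls = Some R''" "R' = l # R''" "\<not> E (fst x) (fst l)"
      by (auto split: if_splits)
    with Cons.IH[of R''] False show ?thesis by (metis append_Cons cm_simps(2))
  qed
qed

lemma canc_decomp: "cm E (fst x) t \<Longrightarrow> canc E x (t @ s) = map_option ((@) t) (canc E x s)"
proof (induction t)
  case Nil then show ?case by (cases "canc E x s") auto
next
  case (Cons a t) then show ?case by (cases "canc E x s") auto
qed

lemma canc_hit: "cm E (fst x) t \<Longrightarrow> canc E x (t @ inv_letter x # s) = Some (t @ s)"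
  by (simp add: canc_decomp)

lemma act_None: "canc E x (rev r) = None \<Longrightarrow> act E r x = r @ [x]"
  by (simp add: act_def)

lemma act_Some: "canc E x (rev r) = Some R \<Longrightarrow>
   \<exists>S T. r = S @ inv_letter x # T \<and> cm E (fst x) T \<and> act E r x = S @ T"
proof -
  assume a: "canc E x (rev r) = Some R"
  then obtain t s where h: "rev r = t @ inv_letter x # s" "R = t @ s" "cm E (fst x) t"
    using canc_Some by blast
  then have "r = rev s @ inv_letter x # rev t" by (metis rev_append rev_rev_ident rev.simps append.assoc append_Cons append_Nil)
  moreover have "act E r x = rev s @ rev t" using a h by (simp add: act_def)
  ultimately show ?thesis using h(3) by (intro exI[of _ "rev s"] exI[of _ "rev t"]) auto
qed

lemma act_del: "cm E (fst x) T \<Longrightarrow> act E (S @ inv_letter x # T) x = S @ T"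
proof -
  assume "cm E (fst x) T"
  then have "canc E x (rev (S @ inv_letter x # T)) = Some (rev T @ rev S)"
    using canc_hit[of E x "rev T" "rev S"] by simp
  then show ?thesis by (simp add: act_def)
qed

lemma act_cases:
  "(canc E x (rev r) = None \<and> act E r x = r @ [x]) \<or>
   (\<exists>S T. r = S @ inv_letter x # T \<and> cm E (fst x) T \<and> act E r x = S @ T)"
  by (cases "canc E x (rev r)") (auto dest: act_Some act_None)

lemma canc_None: "canc E x (rev r) = None \<Longrightarrow> r = S @ inv_letter x # T \<Longrightarrow> cm E (fst x) T \<Longrightarrow> False"
  using canc_hit[of E x "rev T" "rev S"] by simp

lemma act_length: "length (act E r x) \<le> Suc (length r)"
  using act_cases[of E x r] by auto

lemma act_set: "set (act E r x) \<subseteq> set r \<union> {x}"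
  using act_cases[of E x r] by auto

context raag begin

lemma act_eqv: "word_over V r \<Longrightarrow> fst x \<in> V \<Longrightarrow> raag_eqv V E (r @ [x]) (act E r x)"
proof -
  assume r: "word_over V r" and x: "fst x \<in> V"
  consider "act E r x = r @ [x]" | S T where "r = S @ inv_letter x # T" "cm E (fst x) T" "act E r x = S @ T"
    using act_cases[of E x r] by blast
  then show ?thesis
  proof cases
    case 1 then show ?thesis by (simp add: eqv_refl)
  next
    case 2
    have "teq E (S @ inv_letter x # (T @ [x])) (S @ inv_letter x # x # T)"
      using teq_app[OF teq_move[OF 2(2)], of "S @ [inv_letter x]" "[]"] by simp
    then have "raag_eqv V E (r @ [x]) (S @ inv_letter x # x # T)" using 2 teq_eqv by simp
    moreover have "raag_eqv V E (S @ inv_letter x # x # T) (S @ T)"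
      using eqv_cancel[of "inv_letter x" S T] x by simp
    ultimately show ?thesis using 2 eqv_trans by metis
  qed
qed

end



lemma sw_here: "fst a \<noteq> fst b \<Longrightarrow> \<not> E (fst a) (fst b) \<Longrightarrow> sw E (p @ a # b # q) (p @ b # a # q)"
  unfolding sw_def by (intro exI[of _ p] exI[of _ q] exI[of _ a] exI[of _ b]) simp

lemma sw_Cons: "sw E u w \<Longrightarrow> sw E (l # u) (l # w)"
  unfolding sw_def by (metis append_Cons)

lemma canc_sw:
  assumes "fst a \<noteq> fst b" "\<not> E (fst a) (fst b)" "\<not> E (fst b) (fst a)"
  shows "(canc E x (P @ a # b # Q) = None \<and> canc E x (P @ b # a # Q) = None) \<or>
    (\<exists>R1 R2. canc E x (P @ a # b # Q) = Some R1 \<and> canc E x (P @ b # a # Q) = Some R2 \<and> (R1 = R2 \<or> sw E R1 R2))"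
proof (induction P)
  case Nil
  show ?case
  proof (cases "canc E x Q")
    case None
    then show ?thesis using assms by (auto simp: inv_letter_def)
  next
    case (Some R)
    then show ?thesis using assms sw_here[of a b E "[]" R] by (auto simp: inv_letter_def)
  qed
next
  case (Cons l P)
  have "sw E (P @ a # b # Q) (P @ b # a # Q)" using sw_here[of a b E P Q] assms by simp
  then show ?case using Cons.IH by (auto intro: sw_Cons)
qed




lemma canc_C1:
  assumes "fst a \<noteq> fst b" "\<not> E (fst a) (fst b)" "\<not> E (fst b) (fst a)"
  shows "canc E a R = Some R1 \<Longrightarrow> canc E b R = Some R2 \<Longrightarrow>
    \<exists>R3. canc E b R1 = Some R3 \<and> canc E a R2 = Some R3"
proof (induction R arbitrary: R1 R2)
  case Nil then show ?case by simp
next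
  case (Cons l R)
  show ?case
  proof (cases "fst l = fst a")
    case True
    with Cons.prems assms obtain R2' where "l = inv_letter a" "R1 = R" "canc E b R = Some R2'" "R2 = l # R2'"
      by (auto split: if_splits)
    then show ?thesis using True by auto
  next
    case fa: False
    show ?thesis
    proof (cases "fst l = fst b")
      case True
      with Cons.prems assms fa obtain R1' where "l = inv_letter b" "R2 = R" "canc E a R = Some R1'" "R1 = l # R1'"
        by (auto split: if_splits)
      then show ?thesis using True by auto
    next
      case False
      with Cons.prems fa obtain R1' R2' where "canc E a R = Some R1'" "R1 = l # R1'"
        "canc E b R = Some R2'" "R2 = l # R2'" "\<not> E (fst a) (fst l)" "\<not> E (fst b) (fst l)"
        by (auto split: if_splits)
      with Cons.IH[of R1' R2'] False fa show ?thesis by auto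
    qed
  qed
qed

lemma canc_C2:
  assumes "fst a \<noteq> fst b" "\<not> E (fst a) (fst b)" "\<not> E (fst b) (fst a)"
  shows "canc E a R = Some R1 \<Longrightarrow> canc E b R = None \<Longrightarrow> canc E b R1 = None"
proof (induction R arbitrary: R1)
  case Nil then show ?case by simp
next
  case (Cons l R)
  show ?case
  proof (cases "fst l = fst a")
    case True
    with Cons.prems assms show ?thesis by (auto split: if_splits)
  next
    case fa: False
    with Cons.prems obtain R1' where "canc E a R = Some R1'" "R1 = l # R1'" "\<not> E (fst a) (fst l)"
      by (auto split: if_splits)
    with Cons.IH[of R1'] Cons.prems fa show ?thesis by (auto split: if_splits)
  qed
qed

lemma canc_Cons_comm: "fst b \<noteq> fst a \<Longrightarrow> \<not> E (fst a) (fst b) \<Longrightarrow> canc E a (b # R) = map_option (Cons b) (canc E a R)"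
  by simp

context raag begin

lemma act_sw: "sw E r r' \<Longrightarrow> teq E (act E r x) (act E r' x)"
proof -
  assume "sw E r r'"
  then obtain p q a b where h: "fst a \<noteq> fst b" "\<not> E (fst a) (fst b)" "r = p @ [a, b] @ q" "r' = p @ [b, a] @ q"
    unfolding sw_def by blast
  have h3: "\<not> E (fst b) (fst a)" using h symE by blast
  have rr: "rev r = rev q @ b # a # rev p" "rev r' = rev q @ a # b # rev p" using h by auto
  from canc_sw[of b a E x "rev q" "rev p"] h h3
  consider "canc E x (rev r) = None" "canc E x (rev r') = None"
    | R1 R2 where "canc E x (rev r) = Some R1" "canc E x (rev r') = Some R2" "R1 = R2 \<or> sw E R1 R2"
    unfolding rr by auto
  then show ?thesis
  proof cases
    case 1
    then have "act E r x = p @ [a, b] @ (q @ [x])" "act E r' x = p @ [b, a] @ (q @ [x])"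
      using h by (auto simp: act_def)
    then show ?thesis using h sw_def by (metis r_into_rtranclp)
  next
    case 2
    then have "act E r x = rev R1" "act E r' x = rev R2" by (auto simp: act_def)
    then show ?thesis using 2(3) sw_rev by (metis r_into_rtranclp rtranclp.rtrancl_refl)
  qed
qed

lemma act_teq: "teq E r r' \<Longrightarrow> teq E (act E r x) (act E r' x)"
  by (induction rule: rtranclp.induct) (auto dest: act_sw intro: rtranclp_trans)

lemma foldl_teq: "teq E r r' \<Longrightarrow> teq E (foldl (act E) r z) (foldl (act E) r' z)"
  by (induction z arbitrary: r r') (auto intro: act_teq)

lemma act_comm:
  assumes "fst a \<noteq> fst b" "\<not> E (fst a) (fst b)"
  shows "teq E (act E (act E r a) b) (act E (act E r b) a)"
proof -
  have ab: "\<not> E (fst b) (fst a)" "fst b \<noteq> fst a" using assms symE by auto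
  define R where "R = rev r"
  have cab: "canc E a (b # R) = map_option (Cons b) (canc E a R)"
    and cba: "canc E b (a # R) = map_option (Cons a) (canc E b R)" using assms ab by auto
  show ?thesis
  proof (cases "canc E a R")
    case None
    note Na = this
    show ?thesis
    proof (cases "canc E b R")
      case None
      have "act E (act E r a) b = r @ [a, b]" "act E (act E r b) a = r @ [b, a]"
        using Na None cab cba by (auto simp: act_def R_def)
      then show ?thesis using sw_here[of a b E r "[]"] assms by (metis r_into_rtranclp append.assoc append_Cons append_Nil)
    next
      case (Some R2)
      have "canc E a R2 = None" using canc_C2[OF ab(2) ab(1) assms(2)] Some Na by blast
      then have "act E (act E r a) b = rev R2 @ [a]" "act E (act E r b) a = rev R2 @ [a]"
        using Na Some cab cba by (auto simp: act_def R_def)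
      then show ?thesis by simp
    qed
  next
    case (Some R1)
    note Sa = this
    show ?thesis
    proof (cases "canc E b R")
      case None
      have "canc E b R1 = None" using canc_C2[OF assms(1,2) ab(1)] Sa None by blast
      then have "act E (act E r a) b = rev R1 @ [b]" "act E (act E r b) a = rev R1 @ [b]"
        using Sa None cab cba by (auto simp: act_def R_def)
      then show ?thesis by simp
    next
      case (Some R2)
      obtain R3 where "canc E b R1 = Some R3" "canc E a R2 = Some R3"
        using canc_C1[OF assms(1,2) ab(1)] Sa Some by blast
      then have "act E (act E r a) b = rev R3" "act E (act E r b) a = rev R3"
        using Sa Some by (auto simp: act_def R_def)
      then show ?thesis by simp
    qed
  qed
qed

end



lemma irrD: "irr E u \<Longrightarrow> u = p @ x # m @ inv_letter x # q \<Longrightarrow> cm E (fst x) m \<Longrightarrow> False"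
  unfolding irr_def by blast

lemma irrI: "(\<And>p x m q. u = p @ x # m @ inv_letter x # q \<Longrightarrow> cm E (fst x) m \<Longrightarrow> False) \<Longrightarrow> irr E u"
  unfolding irr_def by blast

lemma irr_prefix: "irr E (u @ v) \<Longrightarrow> irr E u"
proof (rule irrI)
  fix p x m q assume "irr E (u @ v)" "u = p @ x # m @ inv_letter x # q" "cm E (fst x) m"
  then show False using irrD[of E "u @ v" p x m "q @ v"] by simp
qed

lemma irr_suffix: "irr E (u @ v) \<Longrightarrow> irr E v"
proof (rule irrI)
  fix p x m q assume "irr E (u @ v)" "v = p @ x # m @ inv_letter x # q" "cm E (fst x) m"
  then show False using irrD[of E "u @ v" "u @ p" x m q] by simp
qed

lemma irr_Nil: "irr E []"
  by (rule irrI) simp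

context raag begin

lemma act_inv: "irr E r \<Longrightarrow> teq E (act E (act E r x) (inv_letter x)) r"
proof -
  assume irr: "irr E r"
  consider "act E r x = r @ [x]" | S T where "r = S @ inv_letter x # T" "cm E (fst x) T" "act E r x = S @ T"
    using act_cases[of E x r] by blast
  then show ?thesis
  proof cases
    case 1
    then show ?thesis using act_del[of E "inv_letter x" "[]" r] by simp
  next
    case 2
    have cS: "canc E (inv_letter x) (rev S) = None"
    proof (rule ccontr)
      assume "canc E (inv_letter x) (rev S) \<noteq> None"
      then obtain R where "canc E (inv_letter x) (rev S) = Some R" by blast
      from act_Some[OF this] obtain S' T' where "S = S' @ x # T'" "cm E (fst x) T'" by auto
      then show False using irr 2 irrD[of E r S' x T' T] by simp
    qed
    have "canc E (inv_letter x) (rev (S @ T)) = None"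
      using canc_decomp[of E "inv_letter x" "rev T" "rev S"] 2 cS by simp
    then have "act E (S @ T) (inv_letter x) = S @ (T @ [inv_letter x])"
      by (simp add: act_None)
    then have "act E (act E r x) (inv_letter x) = S @ (T @ [inv_letter x])"
      using 2 by simp
    moreover have "teq E (S @ (T @ [inv_letter x]) @ []) (S @ (inv_letter x # T) @ [])"
      by (rule teq_app) (rule teq_move, use 2 in simp)
    ultimately show ?thesis using 2 by simp
  qed
qed

lemma act_irr: "irr E r \<Longrightarrow> irr E (act E r x)"
proof -
  assume irr: "irr E r"
  consider "canc E x (rev r) = None" "act E r x = r @ [x]"
    | S T where "r = S @ inv_letter x # T" "cm E (fst x) T" "act E r x = S @ T"
    using act_cases[of E x r] by (elim disjE exE conjE) blast+
  then show ?thesis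
  proof cases
    case 1
    show ?thesis unfolding 1(2)
    proof (rule irrI)
      fix p y m q assume h: "r @ [x] = p @ y # m @ inv_letter y # q" "cm E (fst y) m"
      show False
      proof (cases q rule: rev_exhaust)
        case Nil
        then have "r = p @ y # m" "x = inv_letter y" using h by auto
        then have "r = p @ inv_letter x # m" "cm E (fst x) m" using h by auto
        then show False using canc_None 1 by blast
      next
        case (snoc q' z)
        then have "r = p @ y # m @ inv_letter y # q'" using h by auto
        then show False by (rule irrD[OF irr _ h(2)])
      qed
    qed
  next
    case 2
    show ?thesis unfolding 2(3)
    proof (rule irrI)
      fix p y m q assume h: "S @ T = p @ y # m @ inv_letter y # q" and cy: "cm E (fst y) m"
      have "\<exists>us. (S = p @ us \<and> us @ T = y # m @ inv_letter y # q) \<or> (S @ us = p \<and> T = us @ y # m @ inv_letter y # q)"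
        using h by (simp only: append_eq_append_conv2)
      then obtain us where "(S = p @ us \<and> us @ T = y # m @ inv_letter y # q) \<or> (S @ us = p \<and> T = us @ y # m @ inv_letter y # q)"
        by blast
      then show False
      proof
        assume "S @ us = p \<and> T = us @ y # m @ inv_letter y # q"
        then have "r = (S @ inv_letter x # us) @ y # m @ inv_letter y # q" using 2 by simp
        then show False by (rule irrD[OF irr _ cy])
      next
        assume a: "S = p @ us \<and> us @ T = y # m @ inv_letter y # q"
        show False
        proof (cases us)
          case Nil
          then have "r = (S @ [inv_letter x]) @ y # m @ inv_letter y # q" using 2 a by simp
          then show False by (rule irrD[OF irr _ cy])
        next
          case (Cons u1 us')
          then have u1: "u1 = y" "us' @ T = m @ inv_letter y # q" using a by auto
          then have "\<exists>vs. (us' = m @ vs \<and> vs @ T = inv_letter y # q) \<or> (us' @ vs = m \<and> T = vs @ inv_letter y # q)"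
            by (simp only: append_eq_append_conv2)
          then obtain vs where "(us' = m @ vs \<and> vs @ T = inv_letter y # q) \<or> (us' @ vs = m \<and> T = vs @ inv_letter y # q)"
            by blast
          then show False
          proof
            assume b: "us' @ vs = m \<and> T = vs @ inv_letter y # q"
            then have "cm E (fst x) (vs @ inv_letter y # q)" using 2 by simp
            then have "fst y \<noteq> fst x" "\<not> E (fst y) (fst x)" using symE by auto
            then have c2: "cm E (fst y) (us' @ inv_letter x # vs)" using cy b by (metis cm_simps(2,3) fst_inv)
            have "r = p @ y # (us' @ inv_letter x # vs) @ inv_letter y # q"
              using 2 a b Cons u1 by simp
            then show False by (rule irrD[OF irr _ c2])
          next
            assume b: "us' = m @ vs \<and> vs @ T = inv_letter y # q"
            show False
            proof (cases vs)
              case Nil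
              then have "T = inv_letter y # q" "us' = m" using b by auto
              then have "cm E (fst x) (inv_letter y # q)" using 2 by simp
              then have "fst y \<noteq> fst x" "\<not> E (fst y) (fst x)" using symE by auto
              then have c2: "cm E (fst y) (m @ [inv_letter x])" using cy by simp
              have "r = p @ y # (m @ [inv_letter x]) @ inv_letter y # q"
                using 2 a Cons u1 b Nil by simp
              then show False by (rule irrD[OF irr _ c2])
            next
              case (Cons v1 vs')
              then have "v1 = inv_letter y" "q = vs' @ T" using b by auto
              then have "r = p @ y # m @ inv_letter y # (vs' @ inv_letter x # T)"
                using 2 a \<open>us = u1 # us'\<close> u1 b Cons by simp
              then show False by (rule irrD[OF irr _ cy])
            qed
          qed
        qed
      qed
    qed
  qed
qed

lemma Phi_app: "Phi E (p @ z) = foldl (act E) (Phi E p) z"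
  by (simp add: Phi_def)

lemma foldl_irr: "irr E r \<Longrightarrow> irr E (foldl (act E) r z)"
  by (induction z arbitrary: r) (auto intro: act_irr)

lemma Phi_irr: "irr E (Phi E u)"
  unfolding Phi_def by (rule foldl_irr) (rule irr_Nil)

lemma irr_snoc_act: "irr E (u @ [x]) \<Longrightarrow> act E u x = u @ [x]"
proof -
  assume a: "irr E (u @ [x])"
  consider "act E u x = u @ [x]" | S T where "u = S @ inv_letter x # T" "cm E (fst x) T"
    using act_cases[of E x u] by blast
  then show ?thesis
  proof cases
    case 2
    then have "u @ [x] = S @ inv_letter x # T @ inv_letter (inv_letter x) # []" by simp
    moreover have "cm E (fst (inv_letter x)) T" using 2 by simp
    ultimately have False by (rule irrD[OF a])
    then show ?thesis ..
  qed simp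
qed

lemma Phi_id: "irr E u \<Longrightarrow> Phi E u = u"
proof (induction u rule: rev_induct)
  case Nil then show ?case by (simp add: Phi_def)
next
  case (snoc x u)
  then have "Phi E u = u" using irr_prefix by blast
  then show ?case using snoc.prems irr_snoc_act by (simp add: Phi_app)
qed

lemma foldl_length: "length (foldl (act E) r z) \<le> length r + length z"
proof (induction z arbitrary: r)
  case (Cons x z)
  have "length (foldl (act E) (act E r x) z) \<le> length (act E r x) + length z" by (rule Cons.IH)
  then show ?case using act_length[of E r x] by simp
qed simp

lemma Phi_length: "length (Phi E u) \<le> length u"
  unfolding Phi_def using foldl_length[of "[]" u] by simp

lemma foldl_set: "set (foldl (act E) r z) \<subseteq> set r \<union> set z"
proof (induction z arbitrary: r)
  case (Cons x z)
  have "set (foldl (act E) (act E r x) z) \<subseteq> set (act E r x) \<union> set z" by (rule Cons.IH)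
  then show ?case using act_set[of E r x] by auto
qed simp

lemma Phi_over: "word_over V u \<Longrightarrow> word_over V (Phi E u)"
  unfolding Phi_def word_over_def using foldl_set[of "[]" u] by auto

lemma foldl_eqv: "word_over V r \<Longrightarrow> word_over V z \<Longrightarrow> raag_eqv V E (r @ z) (foldl (act E) r z)"
proof (induction z arbitrary: r)
  case Nil then show ?case by (simp add: eqv_refl)
next
  case (Cons x z)
  have ov: "word_over V (act E r x)" using act_set[of E r x] Cons.prems unfolding word_over_def by auto
  have "raag_eqv V E ((r @ [x]) @ z) (act E r x @ z)"
    using eqv_app[OF act_eqv, of r x "[]" z] Cons.prems by simp
  moreover have "raag_eqv V E (act E r x @ z) (foldl (act E) (act E r x) z)"
    using Cons.IH ov Cons.prems by simp
  ultimately show ?case using eqv_trans by simp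
qed

lemma Phi_eqv: "word_over V u \<Longrightarrow> raag_eqv V E u (Phi E u)"
  unfolding Phi_def using foldl_eqv[of "[]" u] by simp

lemma step_Phi: "raag_step V E u w \<Longrightarrow> teq E (Phi E u) (Phi E w)"
  unfolding raag_step_def
proof (elim disjE exE conjE)
  fix p q x assume h: "u = p @ [x, inv_letter x] @ q" "w = p @ q"
  have "Phi E u = foldl (act E) (act E (act E (Phi E p) x) (inv_letter x)) q"
    using h by (simp add: Phi_app)
  then show ?thesis using h foldl_teq[OF act_inv[OF Phi_irr]] by (simp add: Phi_app)
next
  fix p q a b assume h: "fst a \<noteq> fst b" "\<not> E (fst a) (fst b)" "u = p @ [a, b] @ q" "w = p @ [b, a] @ q"
  then show ?thesis using foldl_teq[OF act_comm[OF h(1,2)]] by (simp add: Phi_app)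
qed

lemma eqv_Phi: "raag_eqv V E u w \<Longrightarrow> teq E (Phi E u) (Phi E w)"
  unfolding raag_eqv_def
  by (induction rule: rtranclp.induct) (auto dest: step_Phi intro: teq_sym rtranclp_trans)

end



lemma F_append: "F E (s @ t) = F E s \<union> {y \<in> F E t. \<forall>z\<in>set s. y \<noteq> fst z \<and> \<not> E (fst z) y}"
proof (induction s)
  case (Cons x s)
  show ?case
    apply (simp only: append_Cons F.simps Cons.IH)
    apply (rule set_eqI)
    apply simp
    by blast
qed simp

lemma F_sub: "F E u \<subseteq> fst ` set u"
proof (induction u)
  case (Cons x u)
  have "{y \<in> F E u. y \<noteq> fst x \<and> \<not> E (fst x) y} \<subseteq> fst ` set u" using Cons.IH by blast
  then show ?case by (simp add: subset_insertI2)
qed simp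

lemma F_finite: "finite (F E u)"
  by (rule finite_subset[OF F_sub]) simp

lemma F_hd: "fst x \<in> F E (x # r)"
  by simp

lemma find_sw: "\<not> (P a \<and> P b) \<Longrightarrow> find P (p @ a # b # q) = find P (p @ b # a # q)"
  by (induction p) simp_all

context raag begin

lemma F_sw: "sw E u w \<Longrightarrow> F E u = F E w"
proof -
  assume "sw E u w"
  then obtain p q a b where h: "fst a \<noteq> fst b" "\<not> E (fst a) (fst b)" "u = p @ [a, b] @ q" "w = p @ [b, a] @ q"
    unfolding sw_def by blast
  have "\<not> E (fst b) (fst a)" using h symE by blast
  then have "F E (a # b # q) = F E (b # a # q)" using h by auto
  then show ?thesis using h F_append[of E p "a # b # q"] F_append[of E p "b # a # q"] by auto
qed

lemma F_teq: "teq E u w \<Longrightarrow> F E u = F E w"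
  by (induction rule: rtranclp.induct) (auto dest: F_sw)

lemma find_teq: "teq E u w \<Longrightarrow> find (\<lambda>l. fst l = c) u = find (\<lambda>l. fst l = c) w"
proof (induction rule: rtranclp.induct)
  case (rtrancl_into_rtrancl a b c')
  then obtain p q x y where h: "fst x \<noteq> fst y" "b = p @ [x, y] @ q" "c' = p @ [y, x] @ q"
    unfolding sw_def by blast
  then show ?case using rtrancl_into_rtrancl.IH find_sw[of "\<lambda>l. fst l = c" x y p q] by auto
qed simp

lemma F_move: "y \<in> F E u \<Longrightarrow> \<exists>l u'. teq E u (l # u') \<and> fst l = y"
proof (induction u)
  case Nil then show ?case by simp
next
  case (Cons x r)
  show ?case
  proof (cases "y = fst x")
    case True then show ?thesis by blast
  next
    case False
    with Cons.prems have y: "y \<in> F E r" "\<not> E (fst x) y" by auto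
    then obtain l r' where lr: "teq E r (l # r')" "fst l = y" using Cons.IH by blast
    have "sw E (x # l # r') (l # x # r')"
      using sw_here[of x l E "[]" r'] False y lr by simp
    then show ?thesis using teq_Cons[OF lr(1), of x] lr(2)
      by (metis rtranclp.rtrancl_into_rtrancl)
  qed
qed

lemma wlen_Phi: "word_over V w \<Longrightarrow> wlen V E w = length (Phi E w)"
  unfolding wlen_def
proof (rule Least_equality)
  assume "word_over V w"
  then show "\<exists>u. word_over V u \<and> raag_eqv V E w u \<and> length u = length (Phi E w)"
    using Phi_over Phi_eqv by blast
next
  fix n assume "\<exists>u. word_over V u \<and> raag_eqv V E w u \<and> length u = n"
  then obtain u where "raag_eqv V E w u" "length u = n" by blast
  then have "length (Phi E w) = length (Phi E u)" using eqv_Phi teq_length by blast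
  then show "length (Phi E w) \<le> n" using Phi_length[of u] \<open>length u = n\<close> by simp
qed

lemma wlen_eqv: "raag_eqv V E w u \<Longrightarrow> word_over V w \<Longrightarrow> wlen V E w = wlen V E u"
proof -
  assume a: "raag_eqv V E w u" "word_over V w"
  then have "word_over V u" by (rule eqv_over)
  moreover have "length (Phi E w) = length (Phi E u)" using a eqv_Phi teq_length by blast
  ultimately show ?thesis using a wlen_Phi by simp
qed

lemma reduced_iff: "reduced V E u \<longleftrightarrow> word_over V u \<and> irr E u"
proof
  assume "word_over V u \<and> irr E u"
  then show "reduced V E u" unfolding reduced_def using wlen_Phi Phi_id by simp
next
  assume r: "reduced V E u"
  then have ov: "word_over V u" and len: "length u = length (Phi E u)"
    unfolding reduced_def using wlen_Phi by auto
  have "irr E u"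
  proof (rule irrI)
    fix p x m q assume h: "u = p @ x # m @ inv_letter x # q" "cm E (fst x) m"
    have "teq E (p @ (x # m) @ (inv_letter x # q)) (p @ (m @ [x]) @ (inv_letter x # q))"
      by (rule teq_app) (rule teq_sym, rule teq_move, rule h(2))
    then have "raag_eqv V E u ((p @ m) @ x # inv_letter x # q)" using h teq_eqv by simp
    moreover have "raag_eqv V E ((p @ m) @ x # inv_letter x # q) (p @ m @ q)"
      using eqv_cancel[of x "p @ m" q] ov h by simp
    ultimately have "raag_eqv V E u (p @ m @ q)" using eqv_trans by blast
    then have "length (Phi E u) = length (Phi E (p @ m @ q))" using eqv_Phi teq_length by blast
    also have "\<dots> \<le> length (p @ m @ q)" by (rule Phi_length)
    finally show False using len h by simp
  qed
  then show "word_over V u \<and> irr E u" using ov by simp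
qed

lemma reduced_teq: "reduced V E u \<Longrightarrow> reduced V E w \<Longrightarrow> raag_eqv V E u w \<Longrightarrow> teq E u w"
proof -
  assume a: "reduced V E u" "reduced V E w" "raag_eqv V E u w"
  then have "Phi E u = u" "Phi E w = w" using reduced_iff Phi_id by auto
  with eqv_Phi[OF a(3)] show ?thesis by simp
qed

lemma reduced_teq_closed: "reduced V E u \<Longrightarrow> teq E u w \<Longrightarrow> reduced V E w"
proof -
  assume a: "reduced V E u" "teq E u w"
  have "set u = set w" "length u = length w" using a(2) teq_set teq_length by auto
  moreover have "word_over V u" "length u = wlen V E u" using a(1) unfolding reduced_def by auto
  moreover have "wlen V E u = wlen V E w" using wlen_eqv teq_eqv a(2) \<open>word_over V u\<close> by blast
  ultimately show ?thesis unfolding reduced_def word_over_def by simp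
qed

lemma reduced_suffix: "reduced V E (u @ v) \<Longrightarrow> reduced V E v"
  using reduced_iff irr_suffix by auto

lemma reduced_Phi: "word_over V w \<Longrightarrow> reduced V E (Phi E w)"
  using reduced_iff Phi_over Phi_irr by blast

lemma supp_char: "word_over V w \<Longrightarrow> reduced V E u \<Longrightarrow> raag_eqv V E w u \<Longrightarrow> supp V E w = fst ` set u"
proof -
  assume a: "word_over V w" "reduced V E u" "raag_eqv V E w u"
  have "v \<in> fst ` set u'" if "raag_eqv V E w u'" "reduced V E u'" "v \<in> fst ` set u" for u' v
  proof -
    have "raag_eqv V E u u'" using a that eqv_sym eqv_trans by blast
    then have "teq E u u'" using reduced_teq a that by blast
    then have "set u = set u'" by (rule teq_set)
    then show ?thesis using that by simp
  qed
  moreover have "v \<in> fst ` set u" if "raag_eqv V E w u'" "reduced V E u'" "v \<in> fst ` set u'" for u' v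
  proof -
    have "raag_eqv V E u u'" using a that eqv_sym eqv_trans by blast
    then have "teq E u u'" using reduced_teq a that by blast
    then have "set u = set u'" by (rule teq_set)
    then show ?thesis using that by simp
  qed
  ultimately show ?thesis unfolding supp_def using a by blast
qed

lemma start_char: "word_over V w \<Longrightarrow> reduced V E u \<Longrightarrow> raag_eqv V E w u \<Longrightarrow> start_set V E w = F E u"
proof -
  assume a: "word_over V w" "reduced V E u" "raag_eqv V E w u"
  have "v \<in> F E u" if "raag_eqv V E w u'" "reduced V E u'" "u' \<noteq> []" "fst (hd u') = v" for u' v
  proof -
    have "raag_eqv V E u u'" using a that eqv_sym eqv_trans by blast
    then have "teq E u u'" using reduced_teq a that by blast
    then have "F E u = F E u'" by (rule F_teq)
    moreover have "v \<in> F E u'" using that by (cases u') auto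
    ultimately show ?thesis by simp
  qed
  moreover have "\<exists>u'. raag_eqv V E w u' \<and> reduced V E u' \<and> u' \<noteq> [] \<and> fst (hd u') = v" if v: "v \<in> F E u" for v
  proof -
    obtain l u' where "teq E u (l # u')" "fst l = v" using F_move[OF v] by blast
    then show ?thesis using a reduced_teq_closed teq_eqv eqv_trans
      by (intro exI[of _ "l # u'"]) auto
  qed
  ultimately show ?thesis unfolding start_set_def by blast
qed

end



lemma rtranclp_mono': "(\<And>a b. R a b \<Longrightarrow> S a b) \<Longrightarrow> R\<^sup>*\<^sup>* a b \<Longrightarrow> S\<^sup>*\<^sup>* a b"
  by (metis mono_rtranclp)

locale raag_lo = raag V E for V :: "('a::linorder) set" and E
begin

lemma normal_reduced: "normal_word V E u \<Longrightarrow> reduced V E u"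
proof -
  assume "normal_word V E u"
  then have "initially_normal V E (drop 0 u)" unfolding normal_word_def by blast
  then show ?thesis by (simp add: initially_normal_def)
qed

lemma normal_tl: "normal_word V E (x # r) \<Longrightarrow> normal_word V E r"
  unfolding normal_word_def
proof
  fix k assume "\<forall>k. initially_normal V E (drop k (x # r))"
  then have "initially_normal V E (drop (Suc k) (x # r))" by blast
  then show "initially_normal V E (drop k r)" by simp
qed

lemma start_reduced: "reduced V E u \<Longrightarrow> start_set V E u = F E u"
  using start_char[of u u] eqv_refl unfolding reduced_def by blast

lemma normal_hd: "normal_word V E (x # r) \<Longrightarrow> fst x = Max (F E (x # r))"
proof -
  assume a: "normal_word V E (x # r)"
  then have "initially_normal V E (drop 0 (x # r))" unfolding normal_word_def by blast
  then show ?thesis using start_reduced[OF normal_reduced[OF a]] unfolding initially_normal_def by simp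
qed

lemma normal_unique: "normal_word V E u \<Longrightarrow> normal_word V E u' \<Longrightarrow> teq E u u' \<Longrightarrow> u = u'"
proof (induction u arbitrary: u')
  case Nil
  then have "length u' = 0" using teq_length by fastforce
  then show ?case by simp
next
  case (Cons x r)
  obtain x' r' where u': "u' = x' # r'" using teq_length[OF Cons.prems(3)] by (cases u') auto
  have feq: "F E (x # r) = F E u'" using F_teq Cons.prems(3) by blast
  have n2: "normal_word V E (x' # r')" using Cons.prems(2) u' by simp
  have fx: "fst x = fst x'"
  proof -
    have "fst x = Max (F E (x # r))" by (rule normal_hd[OF Cons.prems(1)])
    also have "\<dots> = Max (F E (x' # r'))" using feq u' by (simp only:)
    also have "\<dots> = fst x'" by (rule normal_hd[OF n2, symmetric])
    finally show ?thesis .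
  qed
  have "find (\<lambda>l. fst l = fst x) (x # r) = find (\<lambda>l. fst l = fst x) u'"
    using find_teq Cons.prems(3) by blast
  then have xx: "x = x'" using fx u' by simp
  have ov: "fst x \<in> V" using normal_reduced[OF Cons.prems(1)] unfolding reduced_def by simp
  have "raag_eqv V E (x # r) (x # r')" using teq_eqv Cons.prems(3) u' xx by simp
  then have e1: "raag_eqv V E ([inv_letter x] @ (x # r) @ []) ([inv_letter x] @ (x # r') @ [])" by (rule eqv_app)
  have e2: "raag_eqv V E (inv_letter x # x # r) r" "raag_eqv V E (inv_letter x # x # r') r'"
    using eqv_cancel[of "inv_letter x" "[]" r] eqv_cancel[of "inv_letter x" "[]" r'] ov by simp_all
  have "raag_eqv V E r (inv_letter x # x # r)" using e2(1) by (rule eqv_sym)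
  moreover have "raag_eqv V E (inv_letter x # x # r) (inv_letter x # x # r')" using e1 by simp
  ultimately have "raag_eqv V E r (inv_letter x # x # r')" by (rule eqv_trans)
  then have "raag_eqv V E r r'" using e2(2) by (rule eqv_trans)
  moreover have "normal_word V E r" "normal_word V E r'" using normal_tl Cons.prems u' by auto
  ultimately have "teq E r r'" using reduced_teq normal_reduced by blast
  then have "r = r'" using Cons.IH \<open>normal_word V E r\<close> \<open>normal_word V E r'\<close> by blast
  then show ?case using u' xx by simp
qed

lemma normal_Nil: "normal_word V E []"
  unfolding normal_word_def initially_normal_def using reduced_iff irr_Nil by simp

lemma normal_exists: "reduced V E N \<Longrightarrow> \<exists>u. teq E N u \<and> normal_word V E u"
proof (induction "length N" arbitrary: N rule: less_induct)
  case less
  show ?case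
  proof (cases N)
    case Nil
    then show ?thesis using normal_Nil by blast
  next
    case (Cons n N')
    define m where "m = Max (F E N)"
    have "m \<in> F E N" unfolding m_def
      by (rule Max_in[OF F_finite]) (use Cons in simp)
    then obtain l r where lr: "teq E N (l # r)" "fst l = m" using F_move by blast
    have rlr: "reduced V E (l # r)" using reduced_teq_closed less.prems lr by blast
    then have rr: "reduced V E r" using reduced_suffix[of "[l]" r] by simp
    have "length r < length N" using teq_length[OF lr(1)] by simp
    then obtain ur where ur: "teq E r ur" "normal_word V E ur" using less.hyps rr by blast
    have t: "teq E N (l # ur)" using lr(1) teq_Cons[OF ur(1), of l] by (rule rtranclp_trans)
    have rl: "reduced V E (l # ur)" using reduced_teq_closed less.prems t by blast
    have "F E N = F E (l # ur)" by (rule F_teq[OF t])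
    then have "fst (hd (l # ur)) = Max (start_set V E (l # ur))"
      using start_reduced[OF rl] lr(2) m_def by (simp only: list.sel)
    then have "initially_normal V E (l # ur)"
      unfolding initially_normal_def using rl by blast
    have "initially_normal V E (drop k (l # ur))" for k
    proof (cases k)
      case 0 then show ?thesis using \<open>initially_normal V E (l # ur)\<close> by simp
    next
      case (Suc k') then show ?thesis using ur(2) unfolding normal_word_def by simp
    qed
    then have "normal_word V E (l # ur)" unfolding normal_word_def by blast
    then show ?thesis using t by blast
  qed
qed

lemma sigma_eq: "word_over V w \<Longrightarrow> normal_word V E u \<Longrightarrow> raag_eqv V E w u \<Longrightarrow> sigma V E w = u"
  unfolding sigma_def
proof (rule the_equality)
  assume a: "word_over V w" "normal_word V E u" "raag_eqv V E w u"
  then show "raag_eqv V E w u \<and> normal_word V E u" by simp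
  fix u' assume b: "raag_eqv V E w u' \<and> normal_word V E u'"
  then have "raag_eqv V E u' u" using a eqv_sym eqv_trans by blast
  then have "teq E u' u" using reduced_teq normal_reduced a b by blast
  then show "u' = u" using normal_unique a b by blast
qed

lemma sigma_props: "word_over V w \<Longrightarrow> normal_word V E (sigma V E w) \<and> raag_eqv V E w (sigma V E w)"
proof -
  assume w: "word_over V w"
  obtain u where u: "teq E (Phi E w) u" "normal_word V E u"
    using normal_exists reduced_Phi w by blast
  have "raag_eqv V E w u" using Phi_eqv[OF w] teq_eqv[OF u(1)] eqv_trans by blast
  then show ?thesis using sigma_eq w u by simp
qed

end



context raag_lo begin

lemma single_reduced: "v \<in> V \<Longrightarrow> reduced V E [(v, True)]"
proof -
  assume v: "v \<in> V"
  have "irr E [(v, True)]"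
  proof (rule irrI)
    fix p x m q assume "[(v, True)] = p @ x # m @ inv_letter x # q"
    then have "length [(v, True)] = length (p @ x # m @ inv_letter x # q)" by (rule arg_cong)
    then show False by simp
  qed
  then show ?thesis using reduced_iff v by simp
qed

lemma supp_single: "v \<in> V \<Longrightarrow> supp V E [(v, True)] = {v}"
  using supp_char[of "[(v, True)]" "[(v, True)]"] single_reduced eqv_refl by simp

lemma red12:
  assumes w: "word_over V w1" "word_over V w2"
    and len: "wlen V E (w1 @ w2) = wlen V E w1 + wlen V E w2"
  shows "reduced V E (sigma V E w1 @ sigma V E w2)"
proof -
  let ?s1 = "sigma V E w1" and ?s2 = "sigma V E w2"
  have p1: "normal_word V E ?s1" "raag_eqv V E w1 ?s1" using sigma_props w by auto
  have p2: "normal_word V E ?s2" "raag_eqv V E w2 ?s2" using sigma_props w by auto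
  have r1: "reduced V E ?s1" and r2: "reduced V E ?s2" using p1 p2 normal_reduced by auto
  have e: "raag_eqv V E (w1 @ w2) (?s1 @ ?s2)" using eqv_app2 p1(2) p2(2) by blast
  have "length (?s1 @ ?s2) = wlen V E ?s1 + wlen V E ?s2" using r1 r2 unfolding reduced_def by simp
  also have "\<dots> = wlen V E w1 + wlen V E w2" using wlen_eqv p1(2) p2(2) w by simp
  also have "\<dots> = wlen V E (w1 @ w2)" using len by simp
  also have "\<dots> = wlen V E (?s1 @ ?s2)" using wlen_eqv[OF e] w by simp
  finally show ?thesis using r1 r2 unfolding reduced_def by simp
qed

lemma part1:
  assumes w: "word_over V w1" "word_over V w2"
    and len: "wlen V E (w1 @ w2) = wlen V E w1 + wlen V E w2"
    and sd: "sd_conical V E w2"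
  shows "sigma V E (w1 @ w2) = sigma V E w1 @ sigma V E w2"
proof -
  let ?s1 = "sigma V E w1" and ?s2 = "sigma V E w2"
  have p1: "normal_word V E ?s1" "raag_eqv V E w1 ?s1" using sigma_props w by auto
  have p2: "normal_word V E ?s2" "raag_eqv V E w2 ?s2" using sigma_props w by auto
  have r2: "reduced V E ?s2" using p2 normal_reduced by auto
  have r12: "reduced V E (?s1 @ ?s2)" using red12 w len by blast
  have e: "raag_eqv V E (w1 @ w2) (?s1 @ ?s2)" using eqv_app2 p1(2) p2(2) by blast
  obtain v0 where st: "start_set V E w2 = {v0}" and sdv: "\<forall>v\<in>V. v < v0 \<longrightarrow> E v v0"
    using sd unfolding sd_conical_def conical_apex_def by blast
  have F2: "F E ?s2 = {v0}" using start_char[OF w(2) r2 p2(2)] st by simp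
  have "initially_normal V E (drop k (?s1 @ ?s2))" for k
  proof (cases "k < length ?s1")
    case False
    then have "drop k (?s1 @ ?s2) = drop (k - length ?s1) ?s2" by simp
    then show ?thesis using p2(1) unfolding normal_word_def by simp
  next
    case True
    define s where "s = drop k ?s1"
    have sne: "s \<noteq> []" using True s_def by simp
    have dk: "drop k (?s1 @ ?s2) = s @ ?s2" using True s_def by simp
    have eq: "?s1 @ ?s2 = take k ?s1 @ (s @ ?s2)" using s_def by simp
    have "reduced V E (take k ?s1 @ (s @ ?s2))" using r12 unfolding eq .
    then have rs2: "reduced V E (s @ ?s2)" by (rule reduced_suffix)
    have ins: "initially_normal V E s" using p1(1) s_def unfolding normal_word_def by blast
    then have rs: "reduced V E s" unfolding initially_normal_def by blast
    define h where "h = fst (hd s)"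
    have hmax: "h = Max (F E s)" using ins sne start_reduced[OF rs] unfolding initially_normal_def h_def by simp
    have hin: "h \<in> F E s" using sne h_def by (cases s) auto
    have hV: "h \<in> V" using rs sne h_def unfolding reduced_def word_over_def by (cases s) auto
    have hs: "hd s \<in> set s" using sne by simp
    have Fs2: "F E (s @ ?s2) = F E s \<union> {y \<in> F E ?s2. \<forall>z\<in>set s. y \<noteq> fst z \<and> \<not> E (fst z) y}"
      by (rule F_append)
    have "Max (F E (s @ ?s2)) = h"
    proof (rule Max_eqI)
      show "finite (F E (s @ ?s2))" by (rule F_finite)
      show "h \<in> F E (s @ ?s2)" using Fs2 hin by blast
      fix y assume y: "y \<in> F E (s @ ?s2)"
      show "y \<le> h"
      proof (cases "y \<in> F E s")
        case True
        have "y \<le> Max (F E s)" by (rule Max_ge[OF F_finite True])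
        then show ?thesis using hmax by simp
      next
        case False
        then have "y = v0" "\<forall>z\<in>set s. y \<noteq> fst z \<and> \<not> E (fst z) y" using y Fs2 F2 by auto
        then have "v0 \<noteq> h" "\<not> E h v0" using hs h_def by auto
        then have "\<not> h < v0" using sdv hV by blast
        then show ?thesis using \<open>y = v0\<close> by (simp add: not_less)
      qed
    qed
    then show ?thesis unfolding dk initially_normal_def
      using rs2 start_reduced[OF rs2] h_def sne by simp
  qed
  then have "normal_word V E (?s1 @ ?s2)" unfolding normal_word_def by blast
  moreover have w12: "word_over V (w1 @ w2)" using w by simp
  ultimately show ?thesis using sigma_eq[OF w12 _ e] by blast
qed

lemma part2:
  assumes w: "word_over V w1" "word_over V w2"
    and len: "wlen V E (w1 @ w2) = wlen V E w1 + wlen V E w2"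
    and sd: "sd_conical V E w1" and sns: "strongly_non_split V E w1"
  shows "sd_conical V E (w1 @ w2) \<and> strongly_non_split V E (w1 @ w2)"
proof -
  let ?s1 = "sigma V E w1" and ?s2 = "sigma V E w2"
  have p1: "normal_word V E ?s1" "raag_eqv V E w1 ?s1" using sigma_props w by auto
  have p2: "normal_word V E ?s2" "raag_eqv V E w2 ?s2" using sigma_props w by auto
  have r1: "reduced V E ?s1" and r2: "reduced V E ?s2" using p1 p2 normal_reduced by auto
  have r12: "reduced V E (?s1 @ ?s2)" using red12 w len by blast
  have e: "raag_eqv V E (w1 @ w2) (?s1 @ ?s2)" using eqv_app2 p1(2) p2(2) by blast
  have w12: "word_over V (w1 @ w2)" using w by simp
  obtain v0 where st: "start_set V E w1 = {v0}" and sdv: "\<forall>v\<in>V. v < v0 \<longrightarrow> E v v0"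
    using sd unfolding sd_conical_def conical_apex_def by blast
  define S1 where "S1 = fst ` set ?s1"
  define S2 where "S2 = fst ` set ?s2"
  have sup1: "supp V E w1 = S1" using supp_char[OF w(1) r1 p1(2)] S1_def by simp
  have sup12: "supp V E (w1 @ w2) = S1 \<union> S2" using supp_char[OF w12 r12 e] S1_def S2_def by auto
  have S2V: "S2 \<subseteq> V" using r2 unfolding S2_def reduced_def word_over_def by blast
  have F1: "F E ?s1 = {v0}" using start_char[OF w(1) r1 p1(2)] st by simp
  have dom: "v \<in> S1 \<or> (\<exists>s\<in>S1. E v s)" if v: "v \<in> V" for v
  proof -
    have "\<not> disj_commute V E [(v, True)] w1" using sns v unfolding strongly_non_split_def by blast
    then show ?thesis unfolding disj_commute_def supp_single[OF v] sup1 by blast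
  qed
  have con1: "connected_in E S1" using sns sup1 unfolding strongly_non_split_def non_split_def by simp
  have "start_set V E (w1 @ w2) = {v0}"
  proof -
    have "start_set V E (w1 @ w2) = F E (?s1 @ ?s2)" by (rule start_char[OF w12 r12 e])
    also have "\<dots> = {v0} \<union> {y \<in> F E ?s2. \<forall>z\<in>set ?s1. y \<noteq> fst z \<and> \<not> E (fst z) y}"
      using F_append[of E ?s1 ?s2] F1 by simp
    also have "{y \<in> F E ?s2. \<forall>z\<in>set ?s1. y \<noteq> fst z \<and> \<not> E (fst z) y} = {}"
    proof (rule ccontr)
      assume "{y \<in> F E ?s2. \<forall>z\<in>set ?s1. y \<noteq> fst z \<and> \<not> E (fst z) y} \<noteq> {}"
      then obtain y where y: "y \<in> F E ?s2" "\<forall>z\<in>set ?s1. y \<noteq> fst z \<and> \<not> E (fst z) y" by blast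
      have "y \<in> S2" using F_sub[of E ?s2] y(1) unfolding S2_def by blast
      then have yV: "y \<in> V" using S2V by blast
      have "y \<notin> S1" using y(2) S1_def by auto
      moreover have "\<not> E y s" if "s \<in> S1" for s
        using that y(2) S1_def symE by auto
      ultimately show False using dom[OF yV] by blast
    qed
    finally show ?thesis by simp
  qed
  then have sd12: "sd_conical V E (w1 @ w2)"
    unfolding sd_conical_def conical_apex_def using sdv by blast
  let ?A = "S1 \<union> S2"
  have con: "connected_in E ?A"
    unfolding connected_in_def
  proof (intro conjI ballI)
    show "?A \<noteq> {}" using con1 unfolding connected_in_def by blast
    fix x y assume x: "x \<in> ?A" and y: "y \<in> ?A"
    let ?R = "\<lambda>a b. a \<in> ?A \<and> b \<in> ?A \<and> E a b"
    have near: "\<exists>s\<in>S1. ?R\<^sup>*\<^sup>* z s \<and> ?R\<^sup>*\<^sup>* s z" if z: "z \<in> ?A" for z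
    proof (cases "z \<in> S1")
      case True then show ?thesis by blast
    next
      case False
      then have "z \<in> V" using z S2V by blast
      then obtain s where s: "s \<in> S1" "E z s" using dom False by blast
      then have "?R z s" "?R s z" using z symE by auto
      then show ?thesis using s by blast
    qed
    obtain sx where sx: "sx \<in> S1" "?R\<^sup>*\<^sup>* x sx" using near[OF x] by blast
    obtain sy where sy: "sy \<in> S1" "?R\<^sup>*\<^sup>* sy y" using near[OF y] by blast
    have "(\<lambda>a b. a \<in> S1 \<and> b \<in> S1 \<and> E a b)\<^sup>*\<^sup>* sx sy" using con1 sx sy unfolding connected_in_def by blast
    then have "?R\<^sup>*\<^sup>* sx sy" by (rule rtranclp_mono'[rotated]) blast
    then show "?R\<^sup>*\<^sup>* x y" using sx(2) sy(2) by (meson rtranclp_trans)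
  qed
  have "\<not> disj_commute V E [(v, True)] (w1 @ w2)" if v: "v \<in> V" for v
    unfolding disj_commute_def supp_single[OF v] sup12 using dom[OF v] by blast
  then have "strongly_non_split V E (w1 @ w2)"
    unfolding strongly_non_split_def non_split_def sup12 using con by blast
  then show ?thesis using sd12 by blast
qed

end

theorem lemma2p9:
  fixes V :: "('a::linorder) set" and E :: "'a \<Rightarrow> 'a \<Rightarrow> bool"
    and w1 w2 :: "'a letter list"
  assumes "finite V"
    and "\<And>x y. E x y \<Longrightarrow> E y x"
    and "\<And>x. \<not> E x x"
    and "\<And>x y. E x y \<Longrightarrow> x \<in> V \<and> y \<in> V"
    and "word_over V w1" and "word_over V w2"
    and "wlen V E (w1 @ w2) = wlen V E w1 + wlen V E w2"
  shows "(sd_conical V E w2 \<longrightarrow> sigma V E (w1 @ w2) = sigma V E w1 @ sigma V E w2)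
       \<and> (sd_conical V E w1 \<and> strongly_non_split V E w1 \<longrightarrow>
            sd_conical V E (w1 @ w2) \<and> strongly_non_split V E (w1 @ w2))"
proof -
  interpret raag_lo V E
    by unfold_locales (use assms(2,4) in blast)+
  show ?thesis using part1[OF assms(5,6,7)] part2[OF assms(5,6,7)] by blast
qed


end
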